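(* Let $\alpha=3$ and $k=4$. There is no $\mathbf v\in\mathcal D(\mathbf L_3)\subset\mathcal H^4$ with $\mathbf L_3\mathbf v=\mathbf g_{0,3}$, where $$\mathbf g_{0,3}(y)=\begin{pmatrix}-\log(2+y)-\frac34\frac{1}{2+y}\\ 1-\frac{y}{2+y}+\frac34\frac{y}{(2+y)^2}\end{pmatrix}.$$ Equivalently, there is no $v_1$ with $v_1\in H^{5}(-1,1)$ solving $\big(2y+\frac{6}{2+y}\big)v_1'+(y^2-1)v_1''=\log(2+y)+\frac{1}{(2+y)^2}\big(y^2-\frac34y-\frac52\big)$ on $(-1,1)$.
   Context: $\mathcal H^4=H^5(-1,1)\times H^4(-1,1)$. $\mathbf L_3=\mathbf L+\mathbf L_{3,1}$, where $\mathbf L$ is the closure in $\mathcal H^4$ of $\tilde{\mathbf L}\mathbf q=\big(-y\partial_yq_1+q_2-q_1(-1),\ \partial_y^2q_1-q_2-y\partial_yq_2\big)$ on $C^\infty[-1,1]^2$ and $\mathbf L_{3,1}\mathbf q=\big(q_1(-1),-\frac{6}{2+y}\partial_yq_1\big)$, $q_1(-1)$ denoting the constant function. One has $\mathbf L_3\mathbf g_{0,3}=(1,0)$. *)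

theory Defs
  imports "HOL-Analysis.Analysis"
begin

abbreviation I01 :: "real set" where "I01 \<equiv> {-1<..<1}"

definition L2_I :: "(real \<Rightarrow> real) \<Rightarrow> bool" where
  "L2_I f \<longleftrightarrow> set_borel_measurable lborel I01 f
      \<and> set_integrable lborel I01 (\<lambda>x. (f x)\<^sup>2)"

definition test_fun :: "(real \<Rightarrow> real) \<Rightarrow> bool" where
  "test_fun \<phi> \<longleftrightarrow> (\<forall>j x. ((deriv ^^ j) \<phi>) differentiable (at x))
      \<and> (\<exists>a b. -1 < a \<and> b < 1 \<and> (\<forall>x. x \<notin> {a..b} \<longrightarrow> \<phi> x = 0))"

definition weak_deriv :: "nat \<Rightarrow> (real \<Rightarrow> real) \<Rightarrow> (real \<Rightarrow> real) \<Rightarrow> bool" where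
  "weak_deriv j f g \<longleftrightarrow> (\<forall>\<phi>. test_fun \<phi> \<longrightarrow>
      (LBINT x:I01. f x * (deriv ^^ j) \<phi> x) = (-1) ^ j * (LBINT x:I01. g x * \<phi> x))"

definition sobolev_H :: "nat \<Rightarrow> (real \<Rightarrow> real) \<Rightarrow> (nat \<Rightarrow> real \<Rightarrow> real) \<Rightarrow> bool" where
  "sobolev_H k f g \<longleftrightarrow> L2_I f \<and> (\<forall>j\<in>{1..k}. L2_I (g j) \<and> weak_deriv j f (g j))"

end

theory Submission
  imports Defs "HOL-Computational_Algebra.Polynomial"
begin

fun Dn :: "nat \<Rightarrow> (real \<Rightarrow> real) \<Rightarrow> bool" where
  "Dn 0 f = True"
| "Dn (Suc n) f = ((\<forall>x. f differentiable (at x)) \<and> Dn n (deriv f))"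

definition smooth :: "(real \<Rightarrow> real) \<Rightarrow> bool" where
  "smooth f \<longleftrightarrow> (\<forall>n. Dn n f)"

lemma Dn_iff: "Dn n f \<longleftrightarrow> (\<forall>j<n. \<forall>x. ((deriv ^^ j) f) differentiable (at x))"
proof (induction n arbitrary: f)
  case 0
  then show ?case by simp
next
  case (Suc n)
  have "(\<forall>j<Suc n. \<forall>x. ((deriv ^^ j) f) differentiable (at x)) \<longleftrightarrow>
        (\<forall>x. f differentiable (at x)) \<and> (\<forall>j<n. \<forall>x. ((deriv ^^ Suc j) f) differentiable (at x))"
    by (auto simp del: funpow.simps elim: less_SucE) (metis funpow_0 not0_implies_Suc not_less_eq)
  moreover have "\<And>j. (deriv ^^ Suc j) f = (deriv ^^ j) (deriv f)"
    by (simp add: funpow_Suc_right del: funpow.simps)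
  ultimately show ?case using Suc.IH[of "deriv f"] by simp
qed

lemma test_funI:
  assumes "smooth \<phi>" "-1 < a" "b < 1" "\<And>x. x \<notin> {a..b} \<Longrightarrow> \<phi> x = 0"
  shows "test_fun \<phi>"
  using assms unfolding test_fun_def smooth_def Dn_iff by (metis lessI)

lemma test_fun_smooth:
  assumes "test_fun \<phi>" shows "smooth \<phi>"
  using assms unfolding test_fun_def smooth_def Dn_iff by blast

lemma Dn_mono: "Dn (Suc n) f \<Longrightarrow> Dn n f"
  by (induction n arbitrary: f) auto

lemma Dn_mono': "Dn m f \<Longrightarrow> n \<le> m \<Longrightarrow> Dn n f"
proof (induction m)
  case 0 then show ?case by simp
next
  case (Suc m) then show ?case using Dn_mono[of m f] by (auto simp: le_Suc_eq simp del: Dn.simps)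
qed

lemma rdiff_field: "(f::real\<Rightarrow>real) differentiable (at x) \<Longrightarrow> f field_differentiable (at x)"
  by (simp add: real_differentiable_def field_differentiable_def)

lemma Dn_seq:
  assumes "\<And>j x. (F j has_real_derivative F (Suc j) x) (at x)"
  shows "Dn n (F 0)"
  using assms
proof (induction n arbitrary: F)
  case 0 then show ?case by simp
next
  case (Suc n)
  have d: "deriv (F 0) = F 1"
    using Suc.prems[of 0] by (auto intro!: ext DERIV_imp_deriv)
  have "Dn n ((\<lambda>j. F (Suc j)) 0)"
    by (rule Suc.IH) (use Suc.prems in auto)
  then show ?case using Suc.prems[of 0] d
    by (auto simp: real_differentiable_def)
qed

lemma Dn_add: "Dn n f \<Longrightarrow> Dn n g \<Longrightarrow> Dn n (\<lambda>x. f x + g x)"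
proof (induction n arbitrary: f g)
  case 0 then show ?case by simp
next
  case (Suc n)
  have "deriv (\<lambda>x. f x + g x) = (\<lambda>x. deriv f x + deriv g x)"
    using Suc.prems by (auto intro!: ext deriv_add rdiff_field)
  then show ?case using Suc by auto
qed

lemma Dn_const: "Dn n (\<lambda>x. c)"
proof (induction n arbitrary: c)
  case 0 then show ?case by simp
next
  case (Suc n)
  have "deriv (\<lambda>x. c) = (\<lambda>x. 0)" by auto
  then show ?case using Suc by auto
qed

lemma Dn_mult: "Dn n f \<Longrightarrow> Dn n g \<Longrightarrow> Dn n (\<lambda>x. f x * g x)"
proof (induction n arbitrary: f g)
  case 0 then show ?case by simp
next
  case (Suc n)
  have "deriv (\<lambda>x. f x * g x) = (\<lambda>x. deriv f x * g x + f x * deriv g x)"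
    using Suc.prems by (auto intro!: ext simp: deriv_mult rdiff_field)
  moreover have "Dn n (\<lambda>x. deriv f x * g x)" "Dn n (\<lambda>x. f x * deriv g x)"
    using Suc.prems Dn_mono[of n f] Dn_mono[of n g] by (auto intro!: Suc.IH simp del: Dn.simps) auto
  ultimately show ?case using Suc.prems by (auto intro!: Dn_add differentiable_mult)
qed

lemma Dn_cmult: "Dn n f \<Longrightarrow> Dn n (\<lambda>x. c * f x)"
  using Dn_mult[OF Dn_const] by blast

lemma Dn_diff: "Dn n f \<Longrightarrow> Dn n g \<Longrightarrow> Dn n (\<lambda>x. f x - g x)"
  using Dn_add[of n f "\<lambda>x. (-1) * g x"] Dn_cmult[of n g "-1"] by simp

lemma Dn_affine: "Dn n f \<Longrightarrow> Dn n (\<lambda>x. f (a * x + b))"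
proof (induction n arbitrary: f)
  case 0 then show ?case by simp
next
  case (Suc n)
  have dif: "\<And>x. f differentiable (at x)" using Suc.prems by simp
  have dd: "\<And>x. ((\<lambda>x. f (a * x + b)) has_real_derivative (deriv f (a*x+b) * a)) (at x)"
    using dif by (auto intro!: derivative_eq_intros DERIV_chain2[where f=f]
        simp: DERIV_deriv_iff_real_differentiable)
  then have "deriv (\<lambda>x. f (a * x + b)) = (\<lambda>x. a * deriv f (a * x + b))"
    by (auto intro!: ext DERIV_imp_deriv simp: mult.commute)
  moreover have "Dn n (\<lambda>x. deriv f (a * x + b))" using Suc by auto
  ultimately show ?case using dd by (auto intro!: Dn_cmult simp: real_differentiable_def)
qed

lemma smooth_add: "smooth f \<Longrightarrow> smooth g \<Longrightarrow> smooth (\<lambda>x. f x + g x)"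
  and smooth_diff: "smooth f \<Longrightarrow> smooth g \<Longrightarrow> smooth (\<lambda>x. f x - g x)"
  and smooth_mult: "smooth f \<Longrightarrow> smooth g \<Longrightarrow> smooth (\<lambda>x. f x * g x)"
  and smooth_cmult: "smooth f \<Longrightarrow> smooth (\<lambda>x. c * f x)"
  and smooth_affine: "smooth f \<Longrightarrow> smooth (\<lambda>x. f (a * x + b))"
  and smooth_const: "smooth (\<lambda>x. c)"
  unfolding smooth_def by (auto intro: Dn_add Dn_diff Dn_mult Dn_cmult Dn_affine Dn_const)

lemma smooth_deriv: "smooth f \<Longrightarrow> smooth (deriv f)"
  unfolding smooth_def by (metis Dn.simps(2))

lemma smooth_differentiable: "smooth f \<Longrightarrow> f differentiable (at x)"
  unfolding smooth_def by (metis Dn.simps(2))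

lemma smooth_DERIV: "smooth f \<Longrightarrow> (f has_real_derivative deriv f x) (at x)"
  using smooth_differentiable DERIV_deriv_iff_real_differentiable by blast

lemma smooth_continuous: "smooth f \<Longrightarrow> continuous_on S f"
  using smooth_differentiable differentiable_imp_continuous_within
  by (metis continuous_at_imp_continuous_on)

lemma smooth_antideriv:
  assumes "\<And>x. (G has_real_derivative g x) (at x)" "smooth g"
  shows "smooth G"
proof -
  have "deriv G = g" using assms(1) by (auto intro!: ext DERIV_imp_deriv)
  have "Dn n G" for n
  proof (cases n)
    case (Suc m)
    then show ?thesis using assms \<open>deriv G = g\<close>
      by (auto simp: smooth_def real_differentiable_def)
  qed simp
  then show ?thesis by (simp add: smooth_def)
qed

fun Pn :: "nat \<Rightarrow> real poly" where
  "Pn 0 = 1"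
| "Pn (Suc j) = [:0,0,1:] * (Pn j - pderiv (Pn j))"

definition Ej :: "nat \<Rightarrow> real \<Rightarrow> real" where
  "Ej j x = (if x > 0 then poly (Pn j) (1/x) * exp (-1/x) else 0)"

lemma poly_exp_lim: "((\<lambda>t. poly p t / exp t) \<longlongrightarrow> (0::real)) at_top"
proof -
  have "((\<lambda>t. \<Sum>i\<le>degree p. coeff p i * (t ^ i / exp t)) \<longlongrightarrow> (\<Sum>i\<le>degree p. coeff p i * 0)) at_top"
    by (intro tendsto_sum tendsto_mult tendsto_const tendsto_power_div_exp_0)
  then show ?thesis
    by (simp add: poly_altdef sum_divide_distrib)
qed

lemma Ej_deriv_pos:
  assumes "x > 0"
  shows "(Ej j has_real_derivative Ej (Suc j) x) (at x)"
proof -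
  let ?P = "Pn j"
  have d1: "((\<lambda>x. poly ?P (1/x)) has_real_derivative poly (pderiv ?P) (1/x) * (- 1 / x^2)) (at x)"
    using assms by (auto intro!: derivative_eq_intros DERIV_chain2[OF poly_DERIV] simp: power2_eq_square field_simps)
  have d2: "((\<lambda>x. exp (-1/x)) has_real_derivative exp (-1/x) * (1 / x^2)) (at x)"
    using assms by (auto intro!: derivative_eq_intros simp: power2_eq_square field_simps)
  have "((\<lambda>x. poly ?P (1/x) * exp (-1/x)) has_real_derivative
      poly (pderiv ?P) (1/x) * (- 1 / x^2) * exp (-1/x) + poly ?P (1/x) * (exp (-1/x) * (1 / x^2))) (at x)"
    by (rule DERIV_cong[OF DERIV_mult[OF d1 d2]]) (simp add: algebra_simps)
  moreover have "poly (pderiv ?P) (1/x) * (- 1 / x^2) * exp (-1/x) + poly ?P (1/x) * (exp (-1/x) * (1 / x^2))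
      = Ej (Suc j) x"
    using assms by (simp add: Ej_def power2_eq_square field_simps)
  ultimately have "((\<lambda>x. poly ?P (1/x) * exp (-1/x)) has_real_derivative Ej (Suc j) x) (at x)" by simp
  then show ?thesis
    by (rule has_field_derivative_transform_within_open[where S="{0<..}"]) (use assms in \<open>auto simp: Ej_def\<close>)
qed

lemma Ej_deriv_neg:
  assumes "x < 0"
  shows "(Ej j has_real_derivative Ej (Suc j) x) (at x)"
proof -
  have "((\<lambda>x. 0) has_real_derivative 0) (at x)" by simp
  then have "(Ej j has_real_derivative 0) (at x)"
    by (rule has_field_derivative_transform_within_open[where S="{..<0}"]) (use assms in \<open>auto simp: Ej_def\<close>)
  then show ?thesis using assms by (simp add: Ej_def)
qed

lemma Ej_deriv_0: "(Ej j has_real_derivative Ej (Suc j) 0) (at 0)"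
proof -
  have "((\<lambda>y. Ej j y / y) \<longlongrightarrow> 0) (at (0::real))"
  proof (rule filterlim_split_at)
    show "((\<lambda>y. Ej j y / y) \<longlongrightarrow> 0) (at_left (0::real))"
    proof (rule Lim_transform_eventually)
      show "((\<lambda>y. 0) \<longlongrightarrow> (0::real)) (at_left 0)" by simp
      show "\<forall>\<^sub>F y in at_left 0. 0 = Ej j y / (y::real)"
        unfolding eventually_at_filter by (auto simp: Ej_def)
    qed
    show "((\<lambda>y. Ej j y / y) \<longlongrightarrow> 0) (at_right (0::real))"
    proof (rule Lim_transform_eventually)
      show "((\<lambda>y. poly ([:0,1:] * Pn j) (inverse y) / exp (inverse y)) \<longlongrightarrow> 0) (at_right (0::real))"
        by (rule filterlim_compose[OF poly_exp_lim filterlim_inverse_at_top_right])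
      show "\<forall>\<^sub>F y in at_right 0. poly ([:0,1:] * Pn j) (inverse y) / exp (inverse y) = Ej j y / (y::real)"
        unfolding eventually_at_filter
        by (auto simp: Ej_def exp_minus field_simps)
    qed
  qed
  then show ?thesis
    by (simp add: has_field_derivative_iff Ej_def)
qed

lemma Ej_deriv: "(Ej j has_real_derivative Ej (Suc j) x) (at x)"
  using Ej_deriv_pos Ej_deriv_neg Ej_deriv_0 by (cases x "0::real" rule: linorder_cases) auto

definition E0 :: "real \<Rightarrow> real" where "E0 x = (if x > 0 then exp (-1/x) else 0)"

lemma E0_Ej: "E0 = Ej 0" by (auto simp: E0_def Ej_def)

lemma smooth_E0: "smooth E0"
  unfolding smooth_def E0_Ej using Dn_seq[of "\<lambda>j. Ej j"] Ej_deriv by blast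

lemma zero_deriv_outside:
  fixes \<phi> :: "real \<Rightarrow> real"
  assumes "\<And>x. x \<notin> {a..b} \<Longrightarrow> \<phi> x = 0" "x \<notin> {a..b}"
  shows "deriv \<phi> x = 0"
proof -
  have "((\<lambda>x. 0::real) has_real_derivative 0) (at x)" by simp
  then have "(\<phi> has_real_derivative 0) (at x)"
    by (rule has_field_derivative_transform_within_open[where S="- {a..b}"]) (use assms in auto)
  then show ?thesis by (rule DERIV_imp_deriv)
qed

lemma test_fun_deriv:
  assumes "test_fun \<phi>" shows "test_fun (deriv \<phi>)"
proof -
  obtain a b where ab: "-1 < a" "b < 1" "\<And>x. x \<notin> {a..b} \<Longrightarrow> \<phi> x = 0"
    using assms unfolding test_fun_def by blast
  show ?thesis
    by (rule test_funI[OF smooth_deriv[OF test_fun_smooth[OF assms]] ab(1,2)])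
       (rule zero_deriv_outside[OF ab(3)])
qed

lemma compact_support_bounded:
  fixes \<phi> :: "real \<Rightarrow> real" and a b :: real
  assumes "continuous_on UNIV \<phi>" "\<And>x. x \<notin> {a..b} \<Longrightarrow> \<phi> x = (0::real)"
  shows "\<exists>B. \<forall>x. \<bar>\<phi> x\<bar> \<le> B"
proof -
  have "bounded (\<phi> ` {a..b})"
    by (intro compact_imp_bounded compact_continuous_image continuous_on_subset[OF assms(1)] compact_Icc) auto
  then obtain B where B: "\<And>y. y \<in> \<phi> ` {a..b} \<Longrightarrow> norm y \<le> B" by (auto simp: bounded_iff)
  have "\<bar>\<phi> x\<bar> \<le> max B 0" for x
    using B[of "\<phi> x"] assms(2)[of x] by (cases "x \<in> {a..b}") auto
  then show ?thesis by blast
qed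

lemma test_fun_bounded:
  assumes "test_fun \<phi>" shows "\<exists>B. \<forall>x. \<bar>\<phi> x\<bar> \<le> B"
proof -
  obtain a b where ab: "\<And>x. x \<notin> {a..b} \<Longrightarrow> \<phi> x = 0"
    using assms unfolding test_fun_def by blast
  show ?thesis
    by (rule compact_support_bounded[OF smooth_continuous[OF test_fun_smooth[OF assms]] ab])
qed

lemma smooth_measurable: "smooth \<phi> \<Longrightarrow> \<phi> \<in> borel_measurable borel"
  by (rule borel_measurable_continuous_onI) (rule smooth_continuous)

lemma antideriv_compact:
  fixes g :: "real \<Rightarrow> real"
  assumes cg: "continuous_on UNIV g" and ab: "a \<le> b"
    and z: "\<And>x. x \<le> a \<or> b \<le> x \<Longrightarrow> g x = 0"
  defines "G \<equiv> (\<lambda>x. integral {a..x} g)"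
  shows "\<And>x. (G has_real_derivative g x) (at x)"
    and "\<And>x. x \<le> a \<Longrightarrow> G x = 0"
    and "\<And>x. b \<le> x \<Longrightarrow> G x = integral {a..b} g"
proof -
  have int: "g integrable_on {u..v}" for u v
    by (rule integrable_continuous_interval) (use cg in \<open>auto intro: continuous_on_subset\<close>)
  have zero_int: "integral {u..v} g = 0" if "\<And>x. x \<in> {u..v} \<Longrightarrow> g x = 0" for u v
    using integral_cong[of "{u..v}" g "\<lambda>x. 0"] that by simp
  show G0: "G x = 0" if "x \<le> a" for x
  proof (cases "x = a")
    case True then show ?thesis using z[of a] by (simp add: G_def)
  next
    case False then show ?thesis using that by (simp add: G_def)
  qed
  show G1: "G x = integral {a..b} g" if "b \<le> x" for x
  proof -
    have "integral {a..b} g + integral {b..x} g = integral {a..x} g"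
      using Henstock_Kurzweil_Integration.integral_combine[OF ab that int] .
    moreover have "integral {b..x} g = 0" by (rule zero_int) (use z in auto)
    ultimately show ?thesis by (simp add: G_def)
  qed
  fix x
  show "(G has_real_derivative g x) (at x)"
  proof (cases "x < a")
    case True
    have "((\<lambda>x. 0) has_real_derivative 0) (at x)" by simp
    then have "(G has_real_derivative 0) (at x)"
      by (rule has_field_derivative_transform_within_open[where S="{..<a}"]) (use True G0 in auto)
    then show ?thesis using z[of x] True by simp
  next
    case False
    show ?thesis
    proof (cases "b < x")
      case True
      have "((\<lambda>x. integral {a..b} g) has_real_derivative 0) (at x)" by simp
      then have "(G has_real_derivative 0) (at x)"
        by (rule has_field_derivative_transform_within_open[where S="{b<..}"]) (use True G1 in auto)
      then show ?thesis using z[of x] True by simp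
    next
      case False2: False
      define H where "H = (\<lambda>x. integral {a-1..x} g)"
      have GH: "G y = H y" if "a - 1 < y" for y
      proof (cases "a \<le> y")
        case True
        have "integral {a-1..a} g + integral {a..y} g = integral {a-1..y} g"
          using Henstock_Kurzweil_Integration.integral_combine[of "a-1" a y] True int by auto
        moreover have "integral {a-1..a} g = 0" by (rule zero_int) (use z in auto)
        ultimately show ?thesis by (simp add: G_def H_def)
      next
        case False
        then show ?thesis using G0[of y] zero_int[of "a-1" y] z by (auto simp: H_def)
      qed
      have "(H has_real_derivative g x) (at x within {a-1..b+1})"
        unfolding H_def
        by (rule integral_has_real_derivative) (use cg False False2 in \<open>auto intro: continuous_on_subset\<close>)
      moreover have "at x within {a-1..b+1} = at x"
        by (rule at_within_interior) (use False False2 in auto)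
      ultimately have "(H has_real_derivative g x) (at x)" by simp
      then show ?thesis
        by (rule has_field_derivative_transform_within_open[where S="{a-1<..}"]) (use False GH in auto)
    qed
  qed
qed

definition beta :: "real \<Rightarrow> real" where "beta x = E0 x * E0 (-1 * x + 1)"

lemma smooth_beta: "smooth beta"
  unfolding beta_def by (intro smooth_mult smooth_E0 smooth_affine)

lemma beta_nonneg: "0 \<le> beta x"
  by (auto simp: beta_def E0_def)

lemma beta_zero: "x \<le> 0 \<or> 1 \<le> x \<Longrightarrow> beta x = 0"
  by (auto simp: beta_def E0_def)

lemma beta_lower: assumes "1/4 \<le> x" "x \<le> 3/4" shows "exp (-8) \<le> beta x"
proof -
  have a: "exp (-4) \<le> E0 y" if "1/4 \<le> y" for y
  proof -
    have "-4 \<le> -1/y" using that by (simp add: field_simps)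
    then show ?thesis using that by (simp add: E0_def)
  qed
  have "exp (-4) * exp (-4) \<le> E0 x * E0 (-1 * x + 1)"
    by (rule mult_mono) (use a assms in \<open>auto simp: E0_def\<close>)
  moreover have "exp (-8) = exp (-4) * exp (-4::real)" by (simp add: exp_add[symmetric])
  ultimately show ?thesis by (simp add: beta_def)
qed

lemma beta_cont: "continuous_on UNIV beta"
  using smooth_continuous[OF smooth_beta] .

definition Bb :: real where "Bb = integral {0..1} beta"

lemma beta_int: "beta integrable_on {u..v}"
  by (rule integrable_continuous_interval) (use beta_cont in \<open>auto intro: continuous_on_subset\<close>)

lemma Bb_pos: "0 < Bb"
proof -
  have "integral {1/4..3/4::real} (\<lambda>x. exp (-8)) \<le> integral {1/4..3/4::real} beta"
    by (rule integral_le) (use beta_int beta_lower in auto)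
  also have "\<dots> \<le> Bb" unfolding Bb_def
    by (rule integral_subset_le) (use beta_int beta_nonneg in auto)
  finally have "exp (-8) \<le> Bb * 2" by simp
  then show ?thesis using exp_gt_zero[of "-8::real"] by linarith
qed

definition Sx :: "real \<Rightarrow> real" where "Sx x = integral {0..x} beta / Bb"

lemma Sx_props:
  shows "\<And>x. (Sx has_real_derivative beta x / Bb) (at x)"
    and "\<And>x. x \<le> 0 \<Longrightarrow> Sx x = 0"
    and "\<And>x. 1 \<le> x \<Longrightarrow> Sx x = 1"
proof -
  note A = antideriv_compact[OF beta_cont _ beta_zero, of 0 1, simplified]
  fix x
  show "(Sx has_real_derivative beta x / Bb) (at x)"
    unfolding Sx_def by (rule DERIV_cdivide[OF A(1)])
  show "x \<le> 0 \<Longrightarrow> Sx x = 0" using A(2) by (simp add: Sx_def)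
  show "1 \<le> x \<Longrightarrow> Sx x = 1"
  proof -
    assume "1 \<le> x"
    then have "integral {0..x} beta = Bb" using A(3) unfolding Bb_def by blast
    then show ?thesis using Bb_pos by (simp add: Sx_def)
  qed
qed

lemma smooth_Sx: "smooth Sx"
proof (rule smooth_antideriv[OF Sx_props(1)])
  have e: "(\<lambda>x. (1/Bb) * beta x) = (\<lambda>x. beta x / Bb)" by auto
  have "smooth (\<lambda>x. (1/Bb) * beta x)" by (rule smooth_cmult[OF smooth_beta])
  then show "smooth (\<lambda>x. beta x / Bb)" unfolding e .
qed

lemma Sx_mono: assumes "x \<le> y" shows "Sx x \<le> Sx y"
proof (cases "x \<le> 0")
  case True
  have "0 \<le> integral {0..y} beta" by (rule integral_nonneg) (use beta_int beta_nonneg in auto)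
  then show ?thesis using True Sx_props(2) Bb_pos by (simp add: Sx_def)
next
  case False
  have "integral {0..x} beta \<le> integral {0..y} beta"
    by (rule integral_subset_le) (use beta_int beta_nonneg assms in auto)
  then show ?thesis using Bb_pos by (simp add: Sx_def divide_right_mono)
qed

lemma Sx_bounds: "0 \<le> Sx x" "Sx x \<le> 1"
proof -
  show "0 \<le> Sx x"
  proof (cases "x \<le> 0")
    case True then show ?thesis using Sx_props(2) by simp
  next
    case False then show ?thesis using Sx_mono[of 0 x] Sx_props(2)[of 0] by simp
  qed
  show "Sx x \<le> 1"
  proof (cases "1 \<le> x")
    case True then show ?thesis using Sx_props(3) by simp
  next
    case False then show ?thesis using Sx_mono[of x 1] Sx_props(3)[of 1] by simp
  qed
qed

definition psi :: "real \<Rightarrow> real \<Rightarrow> real \<Rightarrow> real \<Rightarrow> real" where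
  "psi c d n x = Sx (n * x + (- n * c)) - Sx (n * x + (1 - n * d))"

lemma psi_props:
  assumes "0 < n" "1 \<le> n * (d - c)"
  shows "smooth (psi c d n)"
    and "\<And>x. x \<le> c \<or> d \<le> x \<Longrightarrow> psi c d n x = 0"
    and "\<And>x. 0 \<le> psi c d n x"
    and "\<And>x. psi c d n x \<le> 1"
    and "\<And>x. c + 1/n \<le> x \<Longrightarrow> x \<le> d - 1/n \<Longrightarrow> psi c d n x = 1"
proof -
  show "smooth (psi c d n)" unfolding psi_def by (intro smooth_diff smooth_affine smooth_Sx)
  fix x
  show "x \<le> c \<or> d \<le> x \<Longrightarrow> psi c d n x = 0"
  proof (elim disjE)
    assume "x \<le> c"
    then have "n * x \<le> n * c" using assms by (intro mult_left_mono) auto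
    moreover have "n * (d - c) = n * d - n * c" by (simp add: right_diff_distrib)
    ultimately have "n * x + (- n * c) \<le> 0" "n * x + (1 - n * d) \<le> 0"
      using assms by linarith+
    then show ?thesis by (simp add: psi_def Sx_props(2))
  next
    assume "d \<le> x"
    then have "n * d \<le> n * x" using assms by (intro mult_left_mono) auto
    moreover have "n * (d - c) = n * d - n * c" by (simp add: right_diff_distrib)
    ultimately have "1 \<le> n * x + (- n * c)" "1 \<le> n * x + (1 - n * d)"
      using assms by linarith+
    then show ?thesis by (simp add: psi_def Sx_props(3))
  qed
  have "n * (d - c) = n * d - n * c" by (simp add: right_diff_distrib)
  then have "n * x + (1 - n * d) \<le> n * x + (- n * c)" using assms by linarith
  then show "0 \<le> psi c d n x" using Sx_mono by (simp add: psi_def)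
  show "psi c d n x \<le> 1" using Sx_bounds[of "n * x + (- n * c)"] Sx_bounds[of "n * x + (1 - n * d)"]
    by (simp add: psi_def)
  assume h: "c + 1/n \<le> x" "x \<le> d - 1/n"
  have "n * (c + 1/n) \<le> n * x" "n * x \<le> n * (d - 1/n)"
    using h assms by (intro mult_left_mono; simp)+
  moreover have "n * (c + 1/n) = n * c + 1" "n * (d - 1/n) = n * d - 1"
    using assms by (simp_all add: field_simps)
  ultimately have "1 \<le> n * x + (- n * c)" "n * x + (1 - n * d) \<le> 0"
    by linarith+
  then show "psi c d n x = 1" by (simp add: psi_def Sx_props(2,3))
qed

lemma psi_test:
  assumes "0 < n" "1 \<le> n * (d - c)" "-1 < c" "d < 1"
  shows "test_fun (psi c d n)"
  by (rule test_funI[OF psi_props(1)[OF assms(1,2)] assms(3,4)]) (use psi_props(2)[OF assms(1,2)] in auto)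

lemma intz:
  fixes v :: "real \<Rightarrow> real"
  assumes iv: "integrable lborel v"
    and z: "\<And>a. (\<integral>x. indicator {a<..} x * v x \<partial>lborel) = 0"
  shows "AE x in lborel. v x = 0"
proof -
  have vm[measurable]: "v \<in> borel_measurable borel" using iv by auto
  define p where "p x = max 0 (v x)" for x
  define q where "q x = max 0 (- v x)" for x
  have ip: "integrable lborel (\<lambda>x. indicator A x * p x)" if "A \<in> sets borel" for A
    by (rule Bochner_Integration.integrable_bound[OF integrable_norm[OF iv]]) (use that in \<open>auto simp: p_def indicator_def\<close>)
  have iq: "integrable lborel (\<lambda>x. indicator A x * q x)" if "A \<in> sets borel" for A
    by (rule Bochner_Integration.integrable_bound[OF integrable_norm[OF iv]]) (use that in \<open>auto simp: q_def indicator_def\<close>)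
  have em: "emeasure (density lborel (\<lambda>x. ennreal (v x))) A = ennreal (\<integral>x. indicator A x * p x \<partial>lborel)"
    if [measurable]: "A \<in> sets borel" for A
  proof -
    have "emeasure (density lborel (\<lambda>x. ennreal (v x))) A = (\<integral>\<^sup>+ x. ennreal (v x) * indicator A x \<partial>lborel)"
      by (rule emeasure_density) auto
    also have "\<dots> = (\<integral>\<^sup>+ x. ennreal (indicator A x * p x) \<partial>lborel)"
      by (rule nn_integral_cong) (auto simp: p_def indicator_def max_def ennreal_neg)
    also have "\<dots> = ennreal (\<integral>x. indicator A x * p x \<partial>lborel)"
      by (rule nn_integral_eq_integral[OF ip[OF that]]) (auto simp: p_def)
    finally show ?thesis .
  qed
  have en: "emeasure (density lborel (\<lambda>x. ennreal (- v x))) A = ennreal (\<integral>x. indicator A x * q x \<partial>lborel)"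
    if [measurable]: "A \<in> sets borel" for A
  proof -
    have "emeasure (density lborel (\<lambda>x. ennreal (- v x))) A = (\<integral>\<^sup>+ x. ennreal (- v x) * indicator A x \<partial>lborel)"
      by (rule emeasure_density) auto
    also have "\<dots> = (\<integral>\<^sup>+ x. ennreal (indicator A x * q x) \<partial>lborel)"
      by (rule nn_integral_cong) (auto simp: q_def indicator_def max_def ennreal_neg)
    also have "\<dots> = ennreal (\<integral>x. indicator A x * q x \<partial>lborel)"
      by (rule nn_integral_eq_integral[OF iq[OF that]]) (auto simp: q_def)
    finally show ?thesis .
  qed
  have pq: "(\<integral>x. indicator {a<..} x * p x \<partial>lborel) = (\<integral>x. indicator {a<..} x * q x \<partial>lborel)" for a
  proof -
    have "(\<integral>x. indicator {a<..} x * p x \<partial>lborel) - (\<integral>x. indicator {a<..} x * q x \<partial>lborel)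
        = (\<integral>x. indicator {a<..} x * p x - indicator {a<..} x * q x \<partial>lborel)"
    proof -
      have i1: "integrable lborel (\<lambda>x. indicator {a<..} x * p x)" by (rule ip) simp
      have i2: "integrable lborel (\<lambda>x. indicator {a<..} x * q x)" by (rule iq) simp
      show ?thesis using Bochner_Integration.integral_diff[OF i1 i2] by simp
    qed
    also have "\<dots> = (\<integral>x. indicator {a<..} x * v x \<partial>lborel)"
      by (rule Bochner_Integration.integral_cong) (auto simp: p_def q_def indicator_def max_def)
    finally show ?thesis using z[of a] by simp
  qed
  have "density lborel (\<lambda>x. ennreal (v x)) = density lborel (\<lambda>x. ennreal (- v x))"
    by (rule measure_eqI_lessThan) (auto simp: em en pq)
  then have "AE x in lborel. ennreal (v x) = ennreal (- v x)"
    by (intro sigma_finite_measure.density_unique[OF sigma_finite_lborel]) auto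
  then show ?thesis
  proof eventually_elim
    fix x assume h: "ennreal (v x) = ennreal (- v x)"
    show "v x = 0"
    proof (cases "0 \<le> v x")
      case True
      then have "ennreal (- v x) = 0" by (simp add: ennreal_eq_0_iff)
      then have "ennreal (v x) = 0" using h by simp
      then have "v x \<le> 0" by (simp only: ennreal_eq_0_iff)
      then show ?thesis using True by simp
    next
      case False
      then have "ennreal (v x) = 0" by (simp add: ennreal_eq_0_iff)
      then have "ennreal (- v x) = 0" using h by simp
      then have "- v x \<le> 0" by (simp only: ennreal_eq_0_iff)
      then show ?thesis using False by simp
    qed
  qed
qed

lemma ind_I_int: "integrable lborel (indicator I01 :: real \<Rightarrow> real)"
  by (simp add: integrable_indicator_iff)

lemma L2_int:
  assumes "L2_I f" shows "set_integrable lborel I01 f"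
proof -
  have m: "set_borel_measurable lborel I01 f" and sq: "set_integrable lborel I01 (\<lambda>x. (f x)\<^sup>2)"
    using assms by (auto simp: L2_I_def)
  have "set_integrable lborel I01 (\<lambda>x. 1 + (f x)\<^sup>2)"
    using sq ind_I_int unfolding set_integrable_def
    by (simp add: distrib_left)
  moreover have bnd: "\<bar>f x\<bar> \<le> \<bar>1 + (f x)\<^sup>2\<bar>" for x
  proof -
    have a: "0 \<le> (\<bar>f x\<bar> - 1)\<^sup>2" by simp
    have b: "(\<bar>f x\<bar> - 1)\<^sup>2 = (f x)\<^sup>2 - 2*\<bar>f x\<bar> + 1"
      by (simp add: power2_eq_square algebra_simps abs_mult_self_eq)
    have "\<bar>f x\<bar> \<le> 1 + (f x)\<^sup>2" using a b abs_ge_zero[of "f x"] by linarith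
    then show ?thesis by simp
  qed
  ultimately show ?thesis
    by (intro set_integrable_bound[OF _ m]) (auto intro: bnd)
qed

lemma int_mult_bdd:
  fixes h \<phi> :: "real \<Rightarrow> real"
  assumes "set_integrable lborel A h" "\<phi> \<in> borel_measurable borel" "\<And>x. \<bar>\<phi> x\<bar> \<le> B"
  shows "set_integrable lborel A (\<lambda>x. h x * \<phi> x)"
proof -
  have hm: "(\<lambda>x. indicator A x * h x) \<in> borel_measurable borel"
    using assms(1) unfolding set_integrable_def by auto
  have "integrable lborel (\<lambda>x. B * (indicator A x * h x))"
    using assms(1) unfolding set_integrable_def by simp
  then show ?thesis
    unfolding set_integrable_def
  proof (rule Bochner_Integration.integrable_bound)
    show "(\<lambda>x. indicator A x *\<^sub>R (h x * \<phi> x)) \<in> borel_measurable lborel"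
      using hm assms(2) by (simp add: mult.assoc[symmetric])
    have "\<bar>indicator A x * (h x * \<phi> x)\<bar> \<le> \<bar>B * (indicator A x * h x)\<bar>" for x
    proof -
      have "\<bar>indicator A x * (h x * \<phi> x)\<bar> = \<bar>indicator A x * h x\<bar> * \<bar>\<phi> x\<bar>" by (simp add: abs_mult)
      also have "\<dots> \<le> \<bar>indicator A x * h x\<bar> * \<bar>B\<bar>"
        by (rule mult_left_mono) (use assms(3)[of x] in auto)
      finally show ?thesis by (simp add: abs_mult mult_ac)
    qed
    then show "AE x in lborel. norm (indicator A x *\<^sub>R (h x * \<phi> x)) \<le> norm (B * (indicator A x * h x))"
      by simp
  qed
qed

lemma test_int:
  fixes h :: "real \<Rightarrow> real"
  assumes "test_fun \<phi>" "set_integrable lborel A h"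
  shows "set_integrable lborel A (\<lambda>x. h x * \<phi> x)"
proof -
  obtain B where "\<And>x. \<bar>\<phi> x\<bar> \<le> B" using test_fun_bounded[OF assms(1)] by blast
  then show ?thesis
    using int_mult_bdd[OF assms(2) smooth_measurable[OF test_fun_smooth[OF assms(1)]]] by blast
qed

lemma one_int: "set_integrable lborel I01 (\<lambda>x. 1::real)"
  using ind_I_int by (simp add: set_integrable_def)

lemma FL_interval:
  fixes u :: "real \<Rightarrow> real"
  assumes iu: "set_integrable lborel I01 u"
    and z: "\<And>\<phi>. test_fun \<phi> \<Longrightarrow> (LBINT x:I01. u x * \<phi> x) = 0"
    and cd: "-1 < c" "c < d" "d < 1"
  shows "(\<integral>x. indicator {c<..<d} x * u x \<partial>lborel) = 0"
proof -
  define n where "n i = (real i + 1) / (d - c)" for i :: nat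
  have npos: "0 < n i" for i using cd by (simp add: n_def)
  have nge: "1 \<le> n i * (d - c)" for i using cd by (simp add: n_def)
  define s where "s i x = indicator I01 x * u x * psi c d (n i) x" for i x
  define f where "f x = indicator {c<..<d} x * u x" for x
  have um: "(\<lambda>x. indicator I01 x * u x) \<in> borel_measurable borel"
    using iu unfolding set_integrable_def by auto
  have fI: "f x = indicator {c<..<d} x * (indicator I01 x * u x)" for x
    using cd by (auto simp: f_def indicator_def)
  have "(\<lambda>i. integral\<^sup>L lborel (s i)) \<longlonglongrightarrow> integral\<^sup>L lborel f"
  proof (rule integral_dominated_convergence[where w="\<lambda>x. \<bar>indicator I01 x * u x\<bar>"])
    show "f \<in> borel_measurable lborel" unfolding fI using um by simp
    show "s i \<in> borel_measurable lborel" for i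
      unfolding s_def using um smooth_measurable[OF psi_props(1)[OF npos[of i] nge[of i]]] by simp
    show "integrable lborel (\<lambda>x. \<bar>indicator I01 x * u x\<bar>)"
      using iu unfolding set_integrable_def by (simp add: integrable_abs)
    show "AE x in lborel. norm (s i x) \<le> \<bar>indicator I01 x * u x\<bar>" for i
    proof (rule AE_I2)
      fix x
      have "\<bar>s i x\<bar> = \<bar>indicator I01 x * u x\<bar> * \<bar>psi c d (n i) x\<bar>" by (simp add: s_def abs_mult)
      also have "\<dots> \<le> \<bar>indicator I01 x * u x\<bar> * 1"
        by (rule mult_left_mono) (use psi_props(3,4)[OF npos[of i] nge[of i], of x] in auto)
      finally show "norm (s i x) \<le> \<bar>indicator I01 x * u x\<bar>" by simp
    qed
    show "AE x in lborel. (\<lambda>i. s i x) \<longlonglongrightarrow> f x"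
    proof (rule AE_I2)
      fix x
      show "(\<lambda>i. s i x) \<longlonglongrightarrow> f x"
      proof (cases "x \<in> {c<..<d}")
        case False
        then have "s i x = f x" for i using psi_props(2)[OF npos[of i] nge[of i], of x] by (auto simp: s_def f_def)
        then show ?thesis by simp
      next
        case True
        define e where "e = min (x - c) (d - x)"
        have epos: "0 < e" using True by (auto simp: e_def)
        have "(\<lambda>i. (d - c) * inverse (real (Suc i))) \<longlonglongrightarrow> (d - c) * 0"
          by (intro tendsto_mult tendsto_const LIMSEQ_inverse_real_of_nat)
        then have "eventually (\<lambda>i. (d - c) * inverse (real (Suc i)) < e) sequentially"
          using epos by (intro order_tendstoD(2)) auto
        then have "eventually (\<lambda>i. s i x = f x) sequentially"
        proof eventually_elim
          case (elim i)
          have "1 / n i = (d - c) * inverse (real (Suc i))" using cd by (simp add: n_def field_simps)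
          then have "c + 1 / n i \<le> x" "x \<le> d - 1 / n i" using elim by (auto simp: e_def)
          then have "psi c d (n i) x = 1" by (rule psi_props(5)[OF npos[of i] nge[of i]])
          then show ?case using True cd by (simp add: s_def f_def indicator_def)
        qed
        then show ?thesis by (rule tendsto_eventually)
      qed
    qed
  qed
  moreover have "integral\<^sup>L lborel (s i) = 0" for i
  proof -
    have "integral\<^sup>L lborel (s i) = (LBINT x:I01. u x * psi c d (n i) x)"
      by (simp add: s_def[abs_def] set_lebesgue_integral_def mult.assoc)
    also have "\<dots> = 0" by (rule z[OF psi_test[OF npos[of i] nge[of i] cd(1,3)]])
    finally show ?thesis .
  qed
  ultimately have "(\<lambda>i. 0) \<longlonglongrightarrow> integral\<^sup>L lborel f" by simp
  then have "0 = integral\<^sup>L lborel f" by (simp only: LIMSEQ_const_iff)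
  then show ?thesis by (simp add: f_def[abs_def])
qed

lemma FL:
  fixes u :: "real \<Rightarrow> real"
  assumes iu: "set_integrable lborel I01 u"
    and z: "\<And>\<phi>. test_fun \<phi> \<Longrightarrow> (LBINT x:I01. u x * \<phi> x) = 0"
  shows "AE x in lborel. x \<in> I01 \<longrightarrow> u x = 0"
proof -
  define cm where "cm m = -1 + 1 / (real m + 2)" for m :: nat
  define dm where "dm m = 1 - 1 / (real m + 2)" for m :: nat
  have cdm: "-1 < cm m" "cm m < dm m" "dm m < 1" for m
  proof -
    have q: "0 < real m + 2" by simp
    have p: "0 < 1/(real m + 2)" "1/(real m + 2) < 1" using q by (simp_all add: divide_less_eq)
    then show "-1 < cm m" "cm m < dm m" "dm m < 1" unfolding cm_def dm_def by linarith+
  qed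
  have um: "(\<lambda>x. indicator I01 x * u x) \<in> borel_measurable borel"
    using iu unfolding set_integrable_def by auto
  have step: "AE x in lborel. indicator {cm m<..<dm m} x * u x = 0" for m
  proof (rule intz)
    have e: "indicator {cm m<..<dm m} x * u x = indicator {cm m<..<dm m} x * (indicator I01 x * u x)" for x
      using cdm[of m] by (auto simp: indicator_def)
    show "integrable lborel (\<lambda>x. indicator {cm m<..<dm m} x * u x)"
      unfolding e
      by (rule Bochner_Integration.integrable_bound[OF iu[unfolded set_integrable_def]])
         (use um in \<open>auto simp: indicator_def\<close>)
    fix a
    have e2: "indicator {a<..} x * (indicator {cm m<..<dm m} x * u x) = indicator {max a (cm m)<..<dm m} x * u x" for x
      by (auto simp: indicator_def)
    show "(\<integral>x. indicator {a<..} x * (indicator {cm m<..<dm m} x * u x) \<partial>lborel) = 0"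
    proof (cases "max a (cm m) < dm m")
      case True
      show ?thesis unfolding e2 by (rule FL_interval[OF iu z]) (use cdm[of m] True in auto)
    next
      case False
      then have "indicator {max a (cm m)<..<dm m} x = (0::real)" for x by (auto simp: indicator_def)
      then show ?thesis unfolding e2 by simp
    qed
  qed
  have "AE x in lborel. \<forall>m. indicator {cm m<..<dm m} x * u x = 0"
    by (rule AE_all_countable[THEN iffD2]) (rule allI, rule step)
  then show ?thesis
  proof eventually_elim
    case (elim x)
    show ?case
    proof
      assume x: "x \<in> I01"
      define e where "e = min (x + 1) (1 - x)"
      have "0 < e" using x by (auto simp: e_def)
      then obtain m where m: "inverse (real (Suc m)) < e" using reals_Archimedean by blast
      have "1 / (real m + 2) \<le> inverse (real (Suc m))" by (simp add: field_simps)
      then have "x \<in> {cm m<..<dm m}" using m by (auto simp: cm_def dm_def e_def)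
      then show "u x = 0" using elim[rule_format, of m] by simp
    qed
  qed
qed

lemma I_Icc_int:
  fixes k :: "real \<Rightarrow> real"
  assumes "set_integrable lborel I01 k"
  shows "set_integrable lborel {-1..1} k"
proof -
  have "set_integrable lborel I01 k \<longleftrightarrow> set_integrable lborel {-1..1} k"
    by (rule set_integrable_discrete_difference[where X="{-1,1}"]) auto
  then show ?thesis using assms by simp
qed

lemma test_support:
  assumes "test_fun \<phi>"
  obtains a b where "-1 < a" "b < 1" "\<And>x. x \<notin> {a..b} \<Longrightarrow> \<phi> x = 0"
  using assms unfolding test_fun_def by blast

lemma DBR:
  fixes h :: "real \<Rightarrow> real"
  assumes ih: "set_integrable lborel I01 h"
    and z: "\<And>\<phi>. test_fun \<phi> \<Longrightarrow> (LBINT x:I01. h x * deriv \<phi> x) = 0"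
  shows "\<exists>A. AE x in lborel. x \<in> I01 \<longrightarrow> h x = A"
proof -
  define \<phi>0 where "\<phi>0 = psi 0 (1/2) 8"
  have np: "(0::real) < 8" "1 \<le> 8 * (1/2 - (0::real))" by auto
  have t0: "test_fun \<phi>0" unfolding \<phi>0_def by (rule psi_test[OF np]) auto
  have i0: "set_integrable lborel I01 \<phi>0" using test_int[OF t0 one_int] by simp
  define P0 where "P0 = (LBINT x:I01. \<phi>0 x)"
  have P0: "1/4 \<le> P0"
  proof -
    have "(\<integral>x. indicator {1/8..3/8::real} x \<partial>lborel) \<le> (\<integral>x. indicator I01 x * \<phi>0 x \<partial>lborel)"
    proof (rule integral_mono)
      show "integrable lborel (\<lambda>x. indicator {1/8..3/8::real} x :: real)" by simp
      show "integrable lborel (\<lambda>x. indicator I01 x * \<phi>0 x)" using i0 by (simp add: set_integrable_def)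
      fix x
      show "indicator {1/8..3/8::real} x \<le> indicator I01 x * \<phi>0 x"
      proof (cases "x \<in> {1/8..3/8}")
        case True
        then have "\<phi>0 x = 1" unfolding \<phi>0_def by (intro psi_props(5)[OF np]) auto
        then show ?thesis using True by (simp add: indicator_def)
      next
        case False
        then have "indicator {1/8..3/8::real} x = (0::real)" by simp
        moreover have "0 \<le> indicator I01 x * \<phi>0 x"
          using psi_props(3)[OF np, of x] by (simp add: \<phi>0_def)
        ultimately show ?thesis by simp
      qed
    qed
    then show ?thesis by (simp add: P0_def set_lebesgue_integral_def)
  qed
  define A where "A = (LBINT x:I01. h x * \<phi>0 x) / P0"
  have main: "(LBINT x:I01. (h x - A) * \<psi> x) = 0" if t\<psi>: "test_fun \<psi>" for \<psi>
  proof -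
    obtain a1 b1 where ab1: "-1 < a1" "b1 < 1" "\<And>x. x \<notin> {a1..b1} \<Longrightarrow> \<psi> x = 0"
      using test_support[OF t\<psi>] by blast
    define a where "a = (-1 + min a1 0) / 2"
    define b where "b = (1 + max b1 (1/2)) / 2"
    have ab: "-1 < a" "a < a1" "a < 0" "b1 < b" "1/2 < b" "b < 1" "a \<le> b"
      using ab1 by (auto simp: a_def b_def)
    have i\<psi>: "set_integrable lborel I01 \<psi>" using test_int[OF t\<psi> one_int] by simp
    define P\<psi> where "P\<psi> = (LBINT x:I01. \<psi> x)"
    define g where "g x = \<psi> x - (P\<psi> / P0) * \<phi>0 x" for x
    have sg: "smooth g" unfolding g_def[abs_def]
      by (intro smooth_diff smooth_cmult test_fun_smooth t\<psi> t0)
    have gz: "g x = 0" if "x \<le> a \<or> b \<le> x" for x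
    proof -
      have "\<psi> x = 0" using ab1(3)[of x] that ab by auto
      moreover have "\<phi>0 x = 0" unfolding \<phi>0_def by (rule psi_props(2)[OF np]) (use that ab in auto)
      ultimately show ?thesis by (simp add: g_def)
    qed
    note AD = antideriv_compact[OF smooth_continuous[OF sg] ab(7) gz]
    define G where "G x = integral {a..x} g" for x
    have j1: "set_integrable lborel I01 (\<lambda>x. (P\<psi> / P0) * \<phi>0 x)"
      by (rule set_integrable_mult_right[OF i0])
    have "integral {a..b} g = (LBINT x:{a..b}. g x)"
      by (rule set_borel_integral_eq_integral(2)[symmetric])
         (rule borel_integrable_atLeastAtMost', rule smooth_continuous[OF sg])
    also have "\<dots> = (LBINT x:I01. g x)"
      unfolding set_lebesgue_integral_def
    proof (rule Bochner_Integration.integral_cong[OF refl])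
      fix x
      show "indicator {a..b} x *\<^sub>R g x = indicator I01 x *\<^sub>R g x"
        using gz[of x] ab by (cases "x \<le> a \<or> b \<le> x") (auto simp: indicator_def)
    qed
    also have "\<dots> = P\<psi> - (P\<psi> / P0) * P0"
      unfolding g_def set_integral_diff(2)[OF i\<psi> j1] set_integral_mult_right
      by (simp add: P\<psi>_def P0_def)
    also have "\<dots> = 0" using P0 by simp
    finally have gab: "integral {a..b} g = 0" .
    have dG: "(G has_real_derivative g x) (at x)" for x unfolding G_def using AD(1) by blast
    have tG: "test_fun G"
    proof (rule test_funI[OF smooth_antideriv[OF dG sg] ab(1,6)])
      fix x assume "x \<notin> {a..b}"
      then have "x \<le> a \<or> b \<le> x" by auto
      then show "G x = 0" using AD(2)[of x] AD(3)[of x] gab by (auto simp: G_def)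
    qed
    have dGe: "deriv G = g" using dG by (auto intro!: ext DERIV_imp_deriv)
    have i1: "set_integrable lborel I01 (\<lambda>x. h x * \<psi> x)" by (rule test_int[OF t\<psi> ih])
    have i2: "set_integrable lborel I01 (\<lambda>x. h x * \<phi>0 x)" by (rule test_int[OF t0 ih])
    have "0 = (LBINT x:I01. h x * g x)" using z[OF tG] by (simp add: dGe)
    also have "(\<lambda>x. h x * g x) = (\<lambda>x. h x * \<psi> x - (P\<psi> / P0) * (h x * \<phi>0 x))"
      by (auto simp: g_def algebra_simps)
    also have "(LBINT x:I01. h x * \<psi> x - (P\<psi> / P0) * (h x * \<phi>0 x))
        = (LBINT x:I01. h x * \<psi> x) - (P\<psi> / P0) * (LBINT x:I01. h x * \<phi>0 x)"
      unfolding set_integral_diff(2)[OF i1 set_integrable_mult_right[OF i2]] set_integral_mult_right ..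
    finally have e1: "(LBINT x:I01. h x * \<psi> x) = P\<psi> * A" by (simp add: A_def)
    have "(LBINT x:I01. (h x - A) * \<psi> x) = (LBINT x:I01. h x * \<psi> x - A * \<psi> x)"
      by (rule arg_cong[where f="set_lebesgue_integral lborel I01"]) (auto simp: algebra_simps)
    also have "\<dots> = (LBINT x:I01. h x * \<psi> x) - A * P\<psi>"
      unfolding set_integral_diff(2)[OF i1 set_integrable_mult_right[OF i\<psi>]] set_integral_mult_right
      by (simp add: P\<psi>_def)
    finally have "(LBINT x:I01. (h x - A) * \<psi> x) = (LBINT x:I01. h x * \<psi> x) - A * P\<psi>" .
    then show ?thesis using e1 by simp
  qed
  have "AE x in lborel. x \<in> I01 \<longrightarrow> h x - A = 0"
  proof (rule FL)
    show "set_integrable lborel I01 (\<lambda>x. h x - A)"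
      using ih set_integrable_mult_right[OF one_int, of A] by (intro set_integral_diff(1)) auto
  qed (rule main)
  then show ?thesis by auto
qed

lemma IBP:
  fixes k :: "real \<Rightarrow> real"
  assumes ik: "set_integrable lborel I01 k" and t\<phi>: "test_fun \<phi>"
  shows "(LBINT x:I01. integral {-1..x} k * deriv \<phi> x) = - (LBINT x:I01. k x * \<phi> x)"
proof -
  obtain a b where ab: "-1 < a" "b < 1" "\<And>x. x \<notin> {a..b} \<Longrightarrow> \<phi> x = 0"
    using test_support[OF t\<phi>] by blast
  have dz: "deriv \<phi> x = 0" if "x \<notin> {a..b}" for x using zero_deriv_outside[OF ab(3) that] .
  have sm: "smooth \<phi>" using test_fun_smooth[OF t\<phi>] .
  have sd: "smooth (deriv \<phi>)" using smooth_deriv[OF sm] .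
  obtain B where B: "\<And>x. \<bar>deriv \<phi> x\<bar> \<le> B" using test_fun_bounded[OF test_fun_deriv[OF t\<phi>]] by blast
  have ik2: "set_integrable lborel {-1..1} k" using I_Icc_int[OF ik] .
  define kt where "kt s = indicator {-1..1} s * k s" for s
  have ikt: "integrable lborel kt" using ik2 by (simp add: kt_def[abs_def] set_integrable_def)
  have ktm[measurable]: "kt \<in> borel_measurable borel" using ikt by auto
  have dm[measurable]: "deriv \<phi> \<in> borel_measurable borel" using smooth_measurable[OF sd] .
  have pm[measurable]: "\<phi> \<in> borel_measurable borel" using smooth_measurable[OF sm] .
  define F where "F s x = kt s * (indicator I01 x * deriv \<phi> x * (if s \<le> x then 1 else 0))" for s x :: real
  define Gd where "Gd s x = \<bar>kt s\<bar> * (indicator I01 x * B)" for s x :: real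
  have Fm: "(\<lambda>(s, x). F s x) \<in> borel_measurable (lborel \<Otimes>\<^sub>M lborel)"
    unfolding F_def by measurable
  have iI: "integrable lborel (\<lambda>x. indicator I01 x * B)" using ind_I_int by simp
  have iGd: "integrable (lborel \<Otimes>\<^sub>M lborel) (\<lambda>(s, x). Gd s x)"
  proof (rule lborel_pair.Fubini_integrable)
    show "(\<lambda>(s, x). Gd s x) \<in> borel_measurable (lborel \<Otimes>\<^sub>M lborel)" unfolding Gd_def by measurable
    have "(\<lambda>s. \<integral>x. norm (Gd s x) \<partial>lborel) = (\<lambda>s. \<bar>kt s\<bar> * (\<integral>x. \<bar>indicator I01 x * B\<bar> \<partial>lborel))"
      by (auto simp: Gd_def abs_mult)
    then show "integrable lborel (\<lambda>s. \<integral>x. norm (case (s, x) of (s, x) \<Rightarrow> Gd s x) \<partial>lborel)"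
      using ikt by (simp add: integrable_abs)
    show "AE s in lborel. integrable lborel (\<lambda>x. case (s, x) of (s, x) \<Rightarrow> Gd s x)"
      using iI by (simp add: Gd_def)
  qed
  have iF: "integrable (lborel \<Otimes>\<^sub>M lborel) (\<lambda>(s, x). F s x)"
  proof (rule Bochner_Integration.integrable_bound[OF iGd Fm])
    show "AE p in lborel \<Otimes>\<^sub>M lborel. norm (case p of (s, x) \<Rightarrow> F s x) \<le> norm (case p of (s, x) \<Rightarrow> Gd s x)"
    proof (rule AE_I2, clarify)
      fix s x :: real
      have "\<bar>F s x\<bar> = \<bar>kt s\<bar> * (indicator I01 x * \<bar>deriv \<phi> x\<bar> * (if s \<le> x then 1 else 0))"
        by (simp add: F_def abs_mult)
      also have "\<dots> \<le> \<bar>kt s\<bar> * (indicator I01 x * B)"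
        using B[of x] by (intro mult_left_mono) (auto simp: indicator_def)
      also have "\<dots> = \<bar>Gd s x\<bar>" using B[of x] by (simp add: Gd_def abs_mult)
      finally show "norm (F s x) \<le> norm (Gd s x)" by simp
    qed
  qed
  have fub: "(\<integral>x. (\<integral>s. F s x \<partial>lborel) \<partial>lborel) = (\<integral>s. (\<integral>x. F s x \<partial>lborel) \<partial>lborel)"
    by (rule lborel_pair.Fubini_integral[OF iF])
  have L: "(\<integral>s. F s x \<partial>lborel) = indicator I01 x * (integral {-1..x} k * deriv \<phi> x)" for x
  proof (cases "x \<in> I01")
    case False then show ?thesis by (simp add: F_def)
  next
    case True
    have "(\<integral>s. F s x \<partial>lborel) = (\<integral>s. indicator {-1..x} s * k s \<partial>lborel) * deriv \<phi> x"
    proof -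
      have "(\<integral>s. F s x \<partial>lborel) = (\<integral>s. indicator {-1..x} s * k s * deriv \<phi> x \<partial>lborel)"
        by (rule Bochner_Integration.integral_cong) (use True in \<open>auto simp: F_def kt_def indicator_def\<close>)
      then show ?thesis by simp
    qed
    also have "(\<integral>s. indicator {-1..x} s * k s \<partial>lborel) = integral {-1..x} k"
    proof -
      have "set_integrable lborel {-1..x} k"
        by (rule set_integrable_subset[OF ik2]) (use True in auto)
      from set_borel_integral_eq_integral(2)[OF this] show ?thesis
        by (simp add: set_lebesgue_integral_def)
    qed
    finally show ?thesis using True by simp
  qed
  have R: "(\<integral>x. F s x \<partial>lborel) = - (indicator {-1..1} s * k s * \<phi> s)" for s
  proof (cases "s \<in> {-1..1}")
    case False then show ?thesis by (simp add: F_def kt_def)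
  next
    case True
    have "(\<integral>x. F s x \<partial>lborel) = kt s * (\<integral>x. indicator {s..1} x *\<^sub>R deriv \<phi> x \<partial>lborel)"
    proof -
      have "(\<integral>x. F s x \<partial>lborel) = (\<integral>x. kt s * (indicator {s..1} x *\<^sub>R deriv \<phi> x) \<partial>lborel)"
      proof (rule Bochner_Integration.integral_cong[OF refl])
        fix x
        show "F s x = kt s * (indicator {s..1} x *\<^sub>R deriv \<phi> x)"
        proof (cases "x = 1 \<or> x = -1")
          case True
          then have "deriv \<phi> x = 0" using ab by (intro dz) auto
          then show ?thesis by (simp add: F_def)
        next
          case False
          then show ?thesis using \<open>s \<in> {-1..1}\<close> by (auto simp: F_def indicator_def)
        qed
      qed
      then show ?thesis by simp
    qed
    also have "(\<integral>x. indicator {s..1} x *\<^sub>R deriv \<phi> x \<partial>lborel) = \<phi> 1 - \<phi> s"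
    proof (rule integral_FTC_atLeastAtMost)
      show "s \<le> 1" using True by simp
      fix x
      show "(\<phi> has_vector_derivative deriv \<phi> x) (at x within {s..1})"
        using smooth_DERIV[OF sm, of x]
        by (auto simp: has_real_derivative_iff_has_vector_derivative intro: has_vector_derivative_at_within)
    next
      show "continuous_on {s..1} (deriv \<phi>)" by (rule smooth_continuous[OF sd])
    qed
    also have "\<phi> 1 = 0" using ab by (intro ab(3)) auto
    finally show ?thesis using True by (simp add: kt_def)
  qed
  have "(LBINT x:I01. integral {-1..x} k * deriv \<phi> x) = (\<integral>x. (\<integral>s. F s x \<partial>lborel) \<partial>lborel)"
    by (simp add: L set_lebesgue_integral_def)
  also have "\<dots> = (\<integral>s. - (indicator {-1..1} s * k s * \<phi> s) \<partial>lborel)"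
    by (simp add: fub R)
  also have "\<dots> = - (LBINT x:I01. k x * \<phi> x)"
  proof -
    have "(\<integral>s. - (indicator {-1..1} s * k s * \<phi> s) \<partial>lborel) = (\<integral>s. - (indicator I01 s * (k s * \<phi> s)) \<partial>lborel)"
    proof (rule Bochner_Integration.integral_cong[OF refl])
      fix s
      show "- (indicator {-1..1} s * k s * \<phi> s) = - (indicator I01 s * (k s * \<phi> s))"
      proof (cases "s = 1 \<or> s = -1")
        case True
        then have "\<phi> s = 0" using ab by (intro ab(3)) auto
        then show ?thesis by simp
      next
        case False then show ?thesis by (auto simp: indicator_def)
      qed
    qed
    then show ?thesis by (simp add: set_lebesgue_integral_def)
  qed
  finally show ?thesis .
qed

lemma STEP:
  fixes gj gk :: "real \<Rightarrow> real"
  assumes ij: "set_integrable lborel I01 gj" and ik: "set_integrable lborel I01 gk"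
    and w: "\<And>\<phi>. test_fun \<phi> \<Longrightarrow> (LBINT x:I01. gj x * deriv \<phi> x) = - (LBINT x:I01. gk x * \<phi> x)"
  shows "\<exists>c. AE x in lborel. x \<in> I01 \<longrightarrow> gj x = c + integral {-1..x} gk"
proof -
  define K where "K x = integral {-1..x} gk" for x
  have ik2: "set_integrable lborel {-1..1} gk" using I_Icc_int[OF ik] .
  have "gk integrable_on {-1..1}" using set_borel_integral_eq_integral(1)[OF ik2] .
  then have cK: "continuous_on {-1..1} K" unfolding K_def by (rule indefinite_integral_continuous_1)
  have "bounded (K ` {-1..1})"
    by (intro compact_imp_bounded compact_continuous_image cK compact_Icc)
  then obtain B where B0: "\<forall>x\<in>{-1..1}. \<bar>K x\<bar> \<le> B" by (auto simp: bounded_iff)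
  then have B: "\<And>x. x \<in> {-1..1} \<Longrightarrow> \<bar>K x\<bar> \<le> B" by blast
  have iK: "set_integrable lborel I01 K"
  proof (rule set_integrable_bound[where f="\<lambda>x. B"])
    show "set_integrable lborel I01 (\<lambda>x. B)" using set_integrable_mult_right[OF one_int, of B] by simp
    have "(\<lambda>x. indicator I01 x *\<^sub>R K x) \<in> borel_measurable borel"
      by (rule borel_measurable_continuous_on_indicator) (auto intro: continuous_on_subset[OF cK])
    then show "set_borel_measurable lborel I01 K" by (simp add: set_borel_measurable_def)
    show "AE x in lborel. x \<in> I01 \<longrightarrow> norm (K x) \<le> norm B"
      using B by (auto intro!: AE_I2 order_trans[OF _ abs_ge_self])
  qed
  have ih: "set_integrable lborel I01 (\<lambda>x. gj x - K x)" using ij iK by (rule set_integral_diff(1))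
  have "\<exists>A. AE x in lborel. x \<in> I01 \<longrightarrow> gj x - K x = A"
  proof (rule DBR[OF ih])
    fix \<phi> assume t: "test_fun \<phi>"
    have td: "test_fun (deriv \<phi>)" using test_fun_deriv[OF t] .
    have i1: "set_integrable lborel I01 (\<lambda>x. gj x * deriv \<phi> x)" by (rule test_int[OF td ij])
    have i2: "set_integrable lborel I01 (\<lambda>x. K x * deriv \<phi> x)" by (rule test_int[OF td iK])
    have "(LBINT x:I01. (gj x - K x) * deriv \<phi> x) = (LBINT x:I01. gj x * deriv \<phi> x - K x * deriv \<phi> x)"
      by (rule arg_cong[where f="set_lebesgue_integral lborel I01"]) (auto simp: algebra_simps)
    also have "\<dots> = (LBINT x:I01. gj x * deriv \<phi> x) - (LBINT x:I01. K x * deriv \<phi> x)"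
      by (rule set_integral_diff(2)[OF i1 i2])
    also have "\<dots> = 0" using w[OF t] IBP[OF ik t] by (simp add: K_def)
    finally show "(LBINT x:I01. (gj x - K x) * deriv \<phi> x) = 0" .
  qed
  then obtain A where "AE x in lborel. x \<in> I01 \<longrightarrow> gj x - K x = A" by blast
  then have "AE x in lborel. x \<in> I01 \<longrightarrow> gj x = A + integral {-1..x} gk"
    by eventually_elim (auto simp: K_def)
  then show ?thesis by blast
qed

lemma WCHAIN:
  assumes wj: "weak_deriv j v gj" and wk: "weak_deriv (Suc j) v gk" and t: "test_fun \<phi>"
  shows "(LBINT x:I01. gj x * deriv \<phi> x) = - (LBINT x:I01. gk x * \<phi> x)"
proof -
  have e: "(deriv ^^ Suc j) \<phi> = (deriv ^^ j) (deriv \<phi>)"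
    by (simp add: funpow_Suc_right del: funpow.simps)
  have 1: "(LBINT x:I01. v x * (deriv ^^ j) (deriv \<phi>) x) = (-1) ^ j * (LBINT x:I01. gj x * deriv \<phi> x)"
    using wj test_fun_deriv[OF t] unfolding weak_deriv_def by blast
  have 2: "(LBINT x:I01. v x * (deriv ^^ Suc j) \<phi> x) = (-1) ^ Suc j * (LBINT x:I01. gk x * \<phi> x)"
    using wk t unfolding weak_deriv_def by blast
  have "(-1) ^ j * (LBINT x:I01. gj x * deriv \<phi> x) = (-1) ^ j * (- (LBINT x:I01. gk x * \<phi> x))"
    using 1 2 e by simp
  moreover have nz: "(-1::real) ^ j \<noteq> 0" by simp
  ultimately show ?thesis using mult_left_cancel[OF nz] by blast
qed

lemma LIFT:
  fixes W g h :: "real \<Rightarrow> real"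
  assumes cW: "continuous_on {-1..1} W"
    and ae: "AE x in lborel. x \<in> I01 \<longrightarrow> g x = W x"
    and ig: "set_integrable lborel I01 g"
    and st: "AE x in lborel. x \<in> I01 \<longrightarrow> h x = c + integral {-1..x} g"
  shows "AE x in lborel. x \<in> I01 \<longrightarrow> h x = c + integral {-1..x} W"
    and "\<And>x. x \<in> {-1..1} \<Longrightarrow> ((\<lambda>x. c + integral {-1..x} W) has_real_derivative W x) (at x within {-1..1})"
    and "continuous_on {-1..1} (\<lambda>x. c + integral {-1..x} W)"
proof -
  have ig2: "set_integrable lborel {-1..1} g" using I_Icc_int[OF ig] .
  have eq: "integral {-1..x} g = integral {-1..x} W" if x: "x \<in> {-1..1}" for x
  proof -
    have i1: "set_integrable lborel {-1..x} g"
      by (rule set_integrable_subset[OF ig2]) (use x in auto)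
    have i2: "set_integrable lborel {-1..x} W"
      by (rule borel_integrable_atLeastAtMost') (rule continuous_on_subset[OF cW], use x in auto)
    have "integral {-1..x} g = (LBINT s:{-1..x}. g s)"
      using set_borel_integral_eq_integral(2)[OF i1] by simp
    also have "\<dots> = (LBINT s:{-1..x}. W s)"
      unfolding set_lebesgue_integral_def
    proof (rule integral_cong_AE)
      show "(\<lambda>s. indicator {-1..x} s *\<^sub>R g s) \<in> borel_measurable lborel"
        using i1 by (auto simp: set_integrable_def)
      show "(\<lambda>s. indicator {-1..x} s *\<^sub>R W s) \<in> borel_measurable lborel"
        using i2 by (auto simp: set_integrable_def)
      show "AE s in lborel. indicator {-1..x} s *\<^sub>R g s = indicator {-1..x} s *\<^sub>R W s"
        using ae AE_lborel_singleton[of "-1"] AE_lborel_singleton[of 1]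
      proof eventually_elim
        case (elim s)
        then show ?case using x by (cases "s \<in> {-1..x}") auto
      qed
    qed
    also have "\<dots> = integral {-1..x} W"
      using set_borel_integral_eq_integral(2)[OF i2] by simp
    finally show ?thesis .
  qed
  show "AE x in lborel. x \<in> I01 \<longrightarrow> h x = c + integral {-1..x} W"
    using st by eventually_elim (auto simp: eq)
  fix x :: real assume x: "x \<in> {-1..1}"
  have "((\<lambda>x. integral {-1..x} W) has_real_derivative W x) (at x within {-1..1})"
    by (rule integral_has_real_derivative[OF cW x])
  then show "((\<lambda>x. c + integral {-1..x} W) has_real_derivative W x) (at x within {-1..1})"
    by (rule DERIV_cong[OF DERIV_add[OF DERIV_const]]) simp
next
  have "W integrable_on {-1..1}" by (rule integrable_continuous_interval[OF cW])
  then have "continuous_on {-1..1} (\<lambda>x. integral {-1..x} W)" by (rule indefinite_integral_continuous_1)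
  then show "continuous_on {-1..1} (\<lambda>x. c + integral {-1..x} W)" by (intro continuous_intros)
qed

lemma AE_cont_zero:
  fixes \<Phi> :: "real \<Rightarrow> real"
  assumes c: "continuous_on I01 \<Phi>" and ae: "AE x in lborel. x \<in> I01 \<longrightarrow> \<Phi> x = 0"
    and x: "x \<in> I01"
  shows "\<Phi> x = 0"
proof (rule ccontr)
  assume ne: "\<Phi> x \<noteq> 0"
  obtain e where e: "e > 0" "\<And>y. dist x y < e \<Longrightarrow> \<Phi> y \<noteq> 0"
    using continuous_on_open_avoid[OF c _ x ne] by auto
  define e' where "e' = min e (min (x + 1) (1 - x))"
  have e': "0 < e'" using e x by (auto simp: e'_def)
  obtain N where N: "{y \<in> space lborel. \<not> (y \<in> I01 \<longrightarrow> \<Phi> y = 0)} \<subseteq> N" "emeasure lborel N = 0" "N \<in> sets lborel"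
    using ae by (rule AE_E)
  have "{x - e' <..< x + e'} \<subseteq> N"
  proof
    fix y assume y: "y \<in> {x - e' <..< x + e'}"
    then have "dist x y < e" "y \<in> I01" by (auto simp: e'_def dist_real_def)
    then show "y \<in> N" using N(1) e(2) by auto
  qed
  then have "emeasure lborel {x - e' <..< x + e'} \<le> emeasure lborel N"
    by (rule emeasure_mono) (use N in auto)
  then show False using N(2) e' by simp
qed

lemma LIMZ:
  fixes \<Psi> :: "real \<Rightarrow> real"
  assumes c: "continuous_on {-1..1} \<Psi>" and z: "\<And>y. y \<in> I01 \<Longrightarrow> \<Psi> y = 0"
  shows "\<Psi> (-1) = 0"
proof -
  define u where "u n = -1 + 1 / (real n + 2)" for n :: nat
  have uI: "u n \<in> I01" for n
  proof -
    have q: "0 < real n + 2" by simp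
    have "0 < 1/(real n + 2)" "1/(real n + 2) < 1" using q by (simp_all add: divide_less_eq)
    then show ?thesis unfolding u_def by (simp only: greaterThanLessThan_iff) linarith
  qed
  have "(\<lambda>n. 1 / (real n + 2)) \<longlonglongrightarrow> 0"
  proof -
    have "(\<lambda>n. inverse (real (Suc (Suc n)))) \<longlonglongrightarrow> 0"
      by (rule LIMSEQ_Suc[OF LIMSEQ_inverse_real_of_nat])
    moreover have "(\<lambda>n. inverse (real (Suc (Suc n)))) = (\<lambda>n. 1 / (real n + 2))"
      by (auto simp: inverse_eq_divide add.commute)
    ultimately show ?thesis by simp
  qed
  then have "u \<longlonglongrightarrow> -1 + 0" unfolding u_def[abs_def] by (intro tendsto_intros)
  then have "u \<longlonglongrightarrow> -1" by simp
  then have "(\<lambda>n. \<Psi> (u n)) \<longlonglongrightarrow> \<Psi> (-1)"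
  proof -
    have "\<forall>n. u n \<in> {-1..1}" using uI by (auto simp: less_imp_le)
    moreover have H: "\<forall>x. \<forall>a\<in>{-1..1}. (\<forall>n. x n \<in> {-1..1}) \<and> (x \<longlongrightarrow> a) sequentially \<longrightarrow> ((\<Psi> \<circ> x) \<longlongrightarrow> \<Psi> a) sequentially"
      using c continuous_on_sequentially by blast
    ultimately have "((\<Psi> \<circ> u) \<longlongrightarrow> \<Psi> (-1)) sequentially"
      using \<open>u \<longlonglongrightarrow> -1\<close> by (intro H[rule_format, of "-1" u]) auto
    then show ?thesis by (simp add: o_def)
  qed
  moreover have "(\<lambda>n. \<Psi> (u n)) = (\<lambda>n. 0)" using z uI by auto
  ultimately show ?thesis using LIMSEQ_const_iff by metis
qed

definition F0 :: "real \<Rightarrow> real" where "F0 u = ln u + 1 - (19/4) / u + 3 / u^2"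
definition F1 :: "real \<Rightarrow> real" where "F1 u = 1 / u + (19/4) / u^2 - 6 / u^3"
definition F2 :: "real \<Rightarrow> real" where "F2 u = - 1 / u^2 - (19/2) / u^3 + 18 / u^4"
definition B0 :: "real \<Rightarrow> real" where "B0 u = 2 * (u - 2) + 6 / u"
definition B1 :: "real \<Rightarrow> real" where "B1 u = 2 - 6 / u^2"
definition B2 :: "real \<Rightarrow> real" where "B2 u = 12 / u^3"

lemma d_F0: "0 < u \<Longrightarrow> (F0 has_real_derivative F1 u) (at u)"
  unfolding F0_def[abs_def] F1_def
  by (auto intro!: derivative_eq_intros simp: field_simps power2_eq_square power3_eq_cube)

lemma d_F1: "0 < u \<Longrightarrow> (F1 has_real_derivative F2 u) (at u)"
  unfolding F1_def[abs_def] F2_def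
  by (auto intro!: derivative_eq_intros simp: field_simps power2_eq_square power3_eq_cube eval_nat_numeral)

lemma d_B0: "0 < u \<Longrightarrow> (B0 has_real_derivative B1 u) (at u)"
  unfolding B0_def[abs_def] B1_def
  by (auto intro!: derivative_eq_intros simp: field_simps power2_eq_square power3_eq_cube)

lemma d_B1: "0 < u \<Longrightarrow> (B1 has_real_derivative B2 u) (at u)"
  unfolding B1_def[abs_def] B2_def
  by (auto intro!: derivative_eq_intros simp: field_simps power2_eq_square power3_eq_cube)

lemma aux_u: "u \<noteq> 0 \<Longrightarrow> (1 / u\<^sup>2) * ((u - 2)\<^sup>2 - 3 / 4 * (u - 2) - 5 / 2) = 1 - (19/4) / u + 3 / (u::real)^2"
  by (simp add: field_simps power2_eq_square)

lemma ff_F0: "-2 < y \<Longrightarrow> ln (2 + y) + (1 / (2 + y)\<^sup>2) * (y\<^sup>2 - 3 / 4 * y - 5 / 2) = F0 (2 + y)"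
  using aux_u[of "2 + y"] unfolding F0_def by simp

lemma vals: "F0 1 = -3/4" "F1 1 = -1/4" "F2 1 = 15/2" "B0 1 = 4" "B1 1 = -4" "B2 1 = 12"
  by (simp_all add: F0_def F1_def F2_def B0_def B1_def B2_def)


lemma interior_I: "x \<in> I01 \<Longrightarrow> at x within {-1..1} = at x"
  by (rule at_within_interior) simp

lemma zero_deriv_open:
  fixes \<Phi> :: "real \<Rightarrow> real"
  assumes "(\<Phi> has_real_derivative D) (at x)" "x \<in> I01" "\<And>y. y \<in> I01 \<Longrightarrow> \<Phi> y = 0"
  shows "D = 0"
proof -
  have "((\<lambda>y. 0) has_real_derivative 0) (at x)" by simp
  then have "(\<Phi> has_real_derivative 0) (at x)"
    by (rule has_field_derivative_transform_within_open[where S=I01]) (use assms in auto)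
  then show ?thesis using DERIV_unique[OF assms(1)] by blast
qed

lemma cont_of_deriv:
  assumes "\<And>u. 0 < u \<Longrightarrow> (F has_real_derivative G u) (at u)"
  shows "continuous_on {-1..1} (\<lambda>y. F (2 + y))"
proof -
  have "isCont (\<lambda>y. F (2 + y)) y" if "y \<in> {-1..1}" for y
  proof -
    have "isCont F (2 + y)" using assms[of "2 + y"] that by (auto intro: DERIV_isCont)
    then show ?thesis by (intro isCont_o2[where f="\<lambda>y. 2 + y" and g=F]) (auto intro: continuous_intros)
  qed
  then show ?thesis by (intro continuous_at_imp_continuous_on) auto
qed

lemma shift_deriv:
  assumes "\<And>u. 0 < u \<Longrightarrow> (F has_real_derivative G u) (at u)" "-2 < y"
  shows "((\<lambda>y. F (2 + y)) has_real_derivative G (2 + y)) (at y)"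
proof -
  have "((\<lambda>y. F (2 + y)) has_real_derivative G (2 + y) * 1) (at y)"
    by (rule DERIV_chain2[OF assms(1)]) (use assms(2) in \<open>auto intro!: derivative_eq_intros\<close>)
  then show ?thesis by simp
qed

theorem lemmaB1:
  shows "\<not> (\<exists>v g. sobolev_H 5 v g \<and>
     (AE y in lborel. y \<in> I01 \<longrightarrow>
        (2 * y + 6 / (2 + y)) * g 1 y + (y\<^sup>2 - 1) * g 2 y
        = ln (2 + y) + (1 / (2 + y)\<^sup>2) * (y\<^sup>2 - 3 / 4 * y - 5 / 2)))"
proof
  assume "\<exists>v g. sobolev_H 5 v g \<and>
     (AE y in lborel. y \<in> I01 \<longrightarrow>
        (2 * y + 6 / (2 + y)) * g 1 y + (y\<^sup>2 - 1) * g 2 y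
        = ln (2 + y) + (1 / (2 + y)\<^sup>2) * (y\<^sup>2 - 3 / 4 * y - 5 / 2))"
  then obtain v g where sob: "sobolev_H 5 v g"
    and ode: "AE y in lborel. y \<in> I01 \<longrightarrow>
        (2 * y + 6 / (2 + y)) * g 1 y + (y\<^sup>2 - 1) * g 2 y
        = ln (2 + y) + (1 / (2 + y)\<^sup>2) * (y\<^sup>2 - 3 / 4 * y - 5 / 2)"
    by blast
  have ig: "set_integrable lborel I01 (g j)" if "j \<in> {1..5}" for j
    using sob that by (auto simp: sobolev_H_def intro: L2_int)
  have wd: "weak_deriv j v (g j)" if "j \<in> {1..5}" for j
    using sob that by (auto simp: sobolev_H_def)
  have ch: "(LBINT x:I01. g j x * deriv \<phi> x) = - (LBINT x:I01. g (Suc j) x * \<phi> x)"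
    if "j \<in> {1..4}" "test_fun \<phi>" for j \<phi>
    by (rule WCHAIN[OF wd wd that(2)]) (use that(1) in auto)
  have ig1: "set_integrable lborel I01 (g 1)" and ig2: "set_integrable lborel I01 (g 2)"
    and ig3: "set_integrable lborel I01 (g 3)" and ig4: "set_integrable lborel I01 (g 4)"
    and ig5: "set_integrable lborel I01 (g 5)" by (auto intro: ig)
  have ch4: "\<And>\<phi>. test_fun \<phi> \<Longrightarrow> (LBINT x:I01. g 4 x * deriv \<phi> x) = - (LBINT x:I01. g 5 x * \<phi> x)"
    using ch[of 4] by (simp add: numeral_eq_Suc)
  have ch3: "\<And>\<phi>. test_fun \<phi> \<Longrightarrow> (LBINT x:I01. g 3 x * deriv \<phi> x) = - (LBINT x:I01. g 4 x * \<phi> x)"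
    using ch[of 3] by (simp add: numeral_eq_Suc)
  have ch2: "\<And>\<phi>. test_fun \<phi> \<Longrightarrow> (LBINT x:I01. g 2 x * deriv \<phi> x) = - (LBINT x:I01. g 3 x * \<phi> x)"
    using ch[of 2] by (simp add: numeral_eq_Suc)
  have ch1: "\<And>\<phi>. test_fun \<phi> \<Longrightarrow> (LBINT x:I01. g 1 x * deriv \<phi> x) = - (LBINT x:I01. g 2 x * \<phi> x)"
    using ch[of 1] by (simp add: numeral_eq_Suc)
  obtain c4 where s4: "AE x in lborel. x \<in> I01 \<longrightarrow> g 4 x = c4 + integral {-1..x} (g 5)"
    using STEP[OF ig4 ig5 ch4] by auto
  obtain c3 where s3: "AE x in lborel. x \<in> I01 \<longrightarrow> g 3 x = c3 + integral {-1..x} (g 4)"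
    using STEP[OF ig3 ig4 ch3] by auto
  obtain c2 where s2: "AE x in lborel. x \<in> I01 \<longrightarrow> g 2 x = c2 + integral {-1..x} (g 3)"
    using STEP[OF ig2 ig3 ch2] by auto
  obtain c1 where s1: "AE x in lborel. x \<in> I01 \<longrightarrow> g 1 x = c1 + integral {-1..x} (g 2)"
    using STEP[OF ig1 ig2 ch1] by auto
  define W4 where "W4 x = c4 + integral {-1..x} (g 5)" for x
  have "g 5 integrable_on {-1..1}" using set_borel_integral_eq_integral(1)[OF I_Icc_int[OF ig5]] .
  then have "continuous_on {-1..1} (\<lambda>x. integral {-1..x} (g 5))" by (rule indefinite_integral_continuous_1)
  then have cW4: "continuous_on {-1..1} W4" unfolding W4_def[abs_def] by (intro continuous_intros)
  have ae4: "AE x in lborel. x \<in> I01 \<longrightarrow> g 4 x = W4 x" using s4 by (simp add: W4_def)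
  define W3 where "W3 x = c3 + integral {-1..x} W4" for x
  note L3 = LIFT[OF cW4 ae4 ig4 s3, folded W3_def]
  define W2 where "W2 x = c2 + integral {-1..x} W3" for x
  note L2 = LIFT[OF L3(3) L3(1) ig3 s2, folded W2_def]
  define W1 where "W1 x = c1 + integral {-1..x} W2" for x
  note L1 = LIFT[OF L2(3) L2(1) ig2 s1, folded W1_def]
  have dW: "(W1 has_real_derivative W2 y) (at y)" "(W2 has_real_derivative W3 y) (at y)"
    "(W3 has_real_derivative W4 y) (at y)" if "y \<in> I01" for y
    using L1(2)[of y] L2(2)[of y] L3(2)[of y] that interior_I[OF that] by auto
  define \<Phi> where "\<Phi> y = B0 (2 + y) * W1 y + (y\<^sup>2 - 1) * W2 y - F0 (2 + y)" for y
  define \<Phi>1 where "\<Phi>1 y = B1 (2 + y) * W1 y + B0 (2 + y) * W2 y + (2 * y * W2 y + (y\<^sup>2 - 1) * W3 y)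
      - F1 (2 + y)" for y
  define \<Phi>2 where "\<Phi>2 y = B2 (2 + y) * W1 y + B1 (2 + y) * W2 y + (B1 (2 + y) * W2 y + B0 (2 + y) * W3 y)
      + (2 * W2 y + 2 * y * W3 y + (2 * y * W3 y + (y\<^sup>2 - 1) * W4 y)) - F2 (2 + y)" for y
  have cB0: "continuous_on {-1..1} (\<lambda>y. B0 (2 + y))" by (rule cont_of_deriv[OF d_B0])
  have cB1: "continuous_on {-1..1} (\<lambda>y. B1 (2 + y))" by (rule cont_of_deriv[OF d_B1])
  have cB2: "continuous_on {-1..1} (\<lambda>y. B2 (2 + y))"
  proof -
    have "\<And>u. 0 < u \<Longrightarrow> (B2 has_real_derivative (-36 / u^4)) (at u)"
      unfolding B2_def[abs_def]
      by (auto intro!: derivative_eq_intros simp: field_simps power2_eq_square power3_eq_cube eval_nat_numeral)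
    then show ?thesis by (rule cont_of_deriv)
  qed
  have cF0: "continuous_on {-1..1} (\<lambda>y. F0 (2 + y))" by (rule cont_of_deriv[OF d_F0])
  have cF1: "continuous_on {-1..1} (\<lambda>y. F1 (2 + y))" by (rule cont_of_deriv[OF d_F1])
  have cF2: "continuous_on {-1..1} (\<lambda>y. F2 (2 + y))"
  proof -
    have "\<And>u. 0 < u \<Longrightarrow> (F2 has_real_derivative (2 / u^3 + (57/2) / u^4 - 72 / u^5)) (at u)"
      unfolding F2_def[abs_def]
      by (auto intro!: derivative_eq_intros simp: field_simps power2_eq_square power3_eq_cube eval_nat_numeral)
    then show ?thesis by (rule cont_of_deriv)
  qed
  have cW1: "continuous_on {-1..1} W1" using L1(3) by (simp add: W1_def[abs_def])
  have cW2: "continuous_on {-1..1} W2" using L2(3) by (simp add: W2_def[abs_def])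
  have cW3: "continuous_on {-1..1} W3" using L3(3) by (simp add: W3_def[abs_def])
  have cPhi: "continuous_on {-1..1} \<Phi>" unfolding \<Phi>_def[abs_def]
    by (intro continuous_intros cB0 cF0 cW1 cW2)
  have cPhi1: "continuous_on {-1..1} \<Phi>1" unfolding \<Phi>1_def[abs_def]
    by (intro continuous_intros cB0 cB1 cF1 cW1 cW2 cW3)
  have cPhi2: "continuous_on {-1..1} \<Phi>2" unfolding \<Phi>2_def[abs_def]
    by (intro continuous_intros cB0 cB1 cB2 cF2 cW1 cW2 cW3 cW4)
  have aePhi: "AE y in lborel. y \<in> I01 \<longrightarrow> \<Phi> y = 0"
    using ode L1(1) L2(1)
  proof eventually_elim
    case (elim y)
    show ?case
    proof
      assume y: "y \<in> I01"
      have "B0 (2 + y) = 2 * y + 6 / (2 + y)" by (simp add: B0_def)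
      moreover have "g 1 y = W1 y" "g 2 y = W2 y" using elim y by (auto simp: W1_def W2_def)
      moreover have "ln (2 + y) + (1 / (2 + y)\<^sup>2) * (y\<^sup>2 - 3 / 4 * y - 5 / 2) = F0 (2 + y)"
        by (rule ff_F0) (use y in auto)
      ultimately show "\<Phi> y = 0" using elim y by (simp add: \<Phi>_def)
    qed
  qed
  have z0: "\<Phi> y = 0" if "y \<in> I01" for y
    by (rule AE_cont_zero[OF continuous_on_subset[OF cPhi] aePhi that]) auto
  have dPhi: "(\<Phi> has_real_derivative \<Phi>1 y) (at y)" if y: "y \<in> I01" for y
  proof -
    have yy: "-2 < y" using y by simp
    have "(\<Phi> has_real_derivative
        (B1 (2 + y) * W1 y + W2 y * B0 (2 + y)) + ((2 * y) * W2 y + W3 y * (y\<^sup>2 - 1)) - F1 (2 + y)) (at y)"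
      unfolding \<Phi>_def[abs_def]
      by (intro DERIV_diff DERIV_add DERIV_mult shift_deriv[OF d_B0 yy] shift_deriv[OF d_F0 yy] dW[OF y])
         (auto intro!: derivative_eq_intros)
    then show ?thesis by (rule DERIV_cong) (simp add: \<Phi>1_def algebra_simps)
  qed
  have z1: "\<Phi>1 y = 0" if "y \<in> I01" for y
    by (rule zero_deriv_open[OF dPhi[OF that] that z0])
  have dPhi1: "(\<Phi>1 has_real_derivative \<Phi>2 y) (at y)" if y: "y \<in> I01" for y
  proof -
    have yy: "-2 < y" using y by simp
    have "(\<Phi>1 has_real_derivative
        (B2 (2 + y) * W1 y + W2 y * B1 (2 + y)) + (B1 (2 + y) * W2 y + W3 y * B0 (2 + y))
        + ((2 * W2 y + W3 y * (2 * y)) + ((2 * y) * W3 y + W4 y * (y\<^sup>2 - 1))) - F2 (2 + y)) (at y)"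
      unfolding \<Phi>1_def[abs_def]
      by (intro DERIV_diff DERIV_add DERIV_mult shift_deriv[OF d_B0 yy] shift_deriv[OF d_B1 yy]
          shift_deriv[OF d_F1 yy] dW[OF y])
         (auto intro!: derivative_eq_intros)
    then show ?thesis by (rule DERIV_cong) (simp add: \<Phi>2_def algebra_simps)
  qed
  have z2: "\<Phi>2 y = 0" if "y \<in> I01" for y
    by (rule zero_deriv_open[OF dPhi1[OF that] that z1])
  have e0: "\<Phi> (-1) = 0" by (rule LIMZ[OF cPhi z0])
  have e1: "\<Phi>1 (-1) = 0" by (rule LIMZ[OF cPhi1 z1])
  have e2: "\<Phi>2 (-1) = 0" by (rule LIMZ[OF cPhi2 z2])
  from e0 e1 e2 show False
    by (simp add: \<Phi>_def \<Phi>1_def \<Phi>2_def vals)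
qed

end
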